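(* Let $n, N_D, p_1, p_2, r_1, r_2$ be positive integers with $p_1\le N_D$ and $p_2\le N_D$, let $(\boldsymbol{x}^{(i)}, y^{(i)}) \in \mathbb{R}^n\times\mathbb{R}$, $i\in\{1,\dots,N_D\}$, be data points, let $\boldsymbol{g}:\mathbb{R}^n\to\mathbb{R}^{r_1}$, $\boldsymbol{h}:\mathbb{R}^n\to\mathbb{R}^{r_2}$ be continuous, and let $M>0$. Consider the mixed-integer quadratic program $$\min_{\boldsymbol{V},\boldsymbol{W},\alpha^{(i)},\beta^{(i)},\boldsymbol{\gamma}^{(i)},\boldsymbol{\delta}^{(i)}} \sum_{i=1}^{N_D} \big(y^{(i)} - (\alpha^{(i)}-\beta^{(i)})\big)^2$$ over $\boldsymbol{V}\in\mathbb{R}^{p_1\times r_1}$, $\boldsymbol{W}\in\mathbb{R}^{p_2\times r_2}$, subject to, for all $i\in\{1,\dots,N_D\}$: $\alpha^{(i)},\beta^{(i)}\in\mathbb{R}$, $\boldsymbol{V}\boldsymbol{g}(\boldsymbol{x}^{(i)}) \le \boldsymbol{1}\alpha^{(i)}$, $\boldsymbol{V}\boldsymbol{g}(\boldsymbol{x}^{(i)}) + M(\boldsymbol{1}-\boldsymbol{\delta}^{(i)}) \ge \boldsymbol{1}\alpha^{(i)}$, $\sum_{k=1}^{p_1}\boldsymbol{\delta}^{(i)}_k = 1$, $\boldsymbol{\delta}^{(i)}\in\{0,1\}^{p_1}$, $\boldsymbol{W}\boldsymbol{h}(\boldsymbol{x}^{(i)}) \le \boldsymbol{1}\beta^{(i)}$,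 $\boldsymbol{W}\boldsymbol{h}(\boldsymbol{x}^{(i)}) + M(\boldsymbol{1}-\boldsymbol{\gamma}^{(i)}) \ge \boldsymbol{1}\beta^{(i)}$, $\sum_{k=1}^{p_2}\boldsymbol{\gamma}^{(i)}_k = 1$, $\boldsymbol{\gamma}^{(i)}\in\{0,1\}^{p_2}$. Then there exists an optimal solution of this problem satisfying $$\boldsymbol{\delta}^{(i)}_k = 0 \ \text{ for all } i\in\{1,\dots,p_1-1\},\ k\in\{i+1,\dots,p_1\},$$ $$\boldsymbol{\gamma}^{(i)}_k = 0 \ \text{ for all } i\in\{1,\dots,p_2-1\},\ k\in\{i+1,\dots,p_2\},$$ i.e., $\boldsymbol{\delta}^{(1)}_{2:p_1}=\boldsymbol{0}, \boldsymbol{\delta}^{(2)}_{3:p_1}=\boldsymbol{0},\dots,\boldsymbol{\delta}^{(p_1-1)}_{p_1}=0$ and $\boldsymbol{\gamma}^{(1)}_{2:p_2}=\boldsymbol{0},\dots,\boldsymbol{\gamma}^{(p_2-1)}_{p_2}=0$.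
   Context: $\boldsymbol{V}_j$ denotes the $j$-th row of $\boldsymbol{V}$; $\boldsymbol{\delta}^{(i)}_k$ the $k$-th entry of $\boldsymbol{\delta}^{(i)}$ and $\boldsymbol{\delta}^{(i)}_{a:b}$ the subvector of entries $a$ through $b$; $\boldsymbol{1}$ the all-ones vector; vector inequalities are componentwise. *)

theory Defs
  imports "HOL-Analysis.Analysis"
begin

text \<open>Data points are indexed by i in {1..ND}; the rows of
  V (resp. W) are indexed by k in {1..p1} (resp. {1..p2}); row k of V is the vector
  V k in R^r1, so (V g(x))_k = V k \<bullet> g x. The binary vectors delta^(i), gamma^(i)
  are delta i k, gamma i k (real-valued, restricted to {0,1}).\<close>

definition miqp_feasible ::
  "(real^'n \<Rightarrow> real^'r1) \<Rightarrow> (real^'n \<Rightarrow> real^'r2) \<Rightarrow> real \<Rightarrow> (nat \<Rightarrow> real^'n) \<Rightarrow>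
   nat \<Rightarrow> nat \<Rightarrow> nat \<Rightarrow>
   (nat \<Rightarrow> real^'r1) \<Rightarrow> (nat \<Rightarrow> real^'r2) \<Rightarrow> (nat \<Rightarrow> real) \<Rightarrow> (nat \<Rightarrow> real) \<Rightarrow>
   (nat \<Rightarrow> nat \<Rightarrow> real) \<Rightarrow> (nat \<Rightarrow> nat \<Rightarrow> real) \<Rightarrow> bool" where
  "miqp_feasible g h M x ND p1 p2 V W \<alpha> \<beta> \<gamma> \<delta> \<longleftrightarrow>
     (\<forall>i\<in>{1..ND}.
        (\<forall>k\<in>{1..p1}. V k \<bullet> g (x i) \<le> \<alpha> i) \<and>
        (\<forall>k\<in>{1..p1}. V k \<bullet> g (x i) + M * (1 - \<delta> i k) \<ge> \<alpha> i) \<and>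
        (\<Sum>k=1..p1. \<delta> i k) = 1 \<and>
        (\<forall>k\<in>{1..p1}. \<delta> i k \<in> {0, 1}) \<and>
        (\<forall>k\<in>{1..p2}. W k \<bullet> h (x i) \<le> \<beta> i) \<and>
        (\<forall>k\<in>{1..p2}. W k \<bullet> h (x i) + M * (1 - \<gamma> i k) \<ge> \<beta> i) \<and>
        (\<Sum>k=1..p2. \<gamma> i k) = 1 \<and>
        (\<forall>k\<in>{1..p2}. \<gamma> i k \<in> {0, 1}))"

definition miqp_objective :: "(nat \<Rightarrow> real) \<Rightarrow> nat \<Rightarrow> (nat \<Rightarrow> real) \<Rightarrow> (nat \<Rightarrow> real) \<Rightarrow> real" where
  "miqp_objective y ND \<alpha> \<beta> = (\<Sum>i=1..ND. (y i - (\<alpha> i - \<beta> i))^2)"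

end

theory Submission
  imports Defs
begin

lemma proj_bound:
  fixes a :: "nat \<Rightarrow> 'a::euclidean_space" and I :: "nat set"
  assumes "finite I"
  shows "\<exists>C\<ge>0. \<forall>z. \<exists>z'. (\<forall>i\<in>I. z' \<bullet> a i = z \<bullet> a i) \<and> norm z' \<le> C * (\<Sum>i\<in>I. \<bar>z \<bullet> a i\<bar>)"
proof -
  define S where "S = span (a ` I)"
  define \<phi> where "\<phi> y = (\<Sum>i\<in>I. \<bar>y \<bullet> a i\<bar>)" for y
  have A: "\<exists>C\<ge>0. \<forall>y\<in>S. norm y \<le> C * \<phi> y"
  proof (cases "S \<inter> sphere 0 1 = {}")
    case True
    have "y = 0" if "y \<in> S" for y
    proof (rule ccontr)
      assume "y \<noteq> 0"
      then have "y /\<^sub>R norm y \<in> S \<inter> sphere 0 1"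
        using that by (simp add: S_def span_mul)
      then show False using True by blast
    qed
    then show ?thesis by (intro exI[of _ 0]) auto
  next
    case False
    have cK: "compact (S \<inter> sphere 0 1)" unfolding S_def by (intro closed_Int_compact) auto
    have "continuous_on (S \<inter> sphere 0 1) \<phi>" unfolding \<phi>_def by (intro continuous_intros)
    then obtain y0 where y0: "y0 \<in> S \<inter> sphere 0 1" and min: "\<And>y. y \<in> S \<inter> sphere 0 1 \<Longrightarrow> \<phi> y0 \<le> \<phi> y"
      using continuous_attains_inf[OF cK False] by blast
    have pos: "\<phi> y0 > 0"
    proof (rule ccontr)
      assume "\<not> \<phi> y0 > 0"
      then have "\<phi> y0 = 0" unfolding \<phi>_def by (smt (verit) sum_nonneg abs_ge_zero)
      then have "\<forall>i\<in>I. y0 \<bullet> a i = 0" unfolding \<phi>_def using assms by (simp add: sum_nonneg_eq_0_iff)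
      then have "orthogonal y0 y0" using y0 unfolding S_def
        by (intro orthogonal_to_span[of y0 "a ` I" y0]) (auto simp: orthogonal_def)
      then show False using y0 by (simp add: orthogonal_def)
    qed
    show ?thesis
    proof (intro exI[of _ "1 / \<phi> y0"] conjI ballI)
      show "0 \<le> 1 / \<phi> y0" using pos by simp
      fix y assume yS: "y \<in> S"
      show "norm y \<le> 1 / \<phi> y0 * \<phi> y"
      proof (cases "y = 0")
        case True then show ?thesis using pos by (simp add: \<phi>_def)
      next
        case False
        have "y /\<^sub>R norm y \<in> S \<inter> sphere 0 1" using yS False by (simp add: S_def span_mul)
        then have "\<phi> y0 \<le> \<phi> (y /\<^sub>R norm y)" by (rule min)
        also have "\<phi> (y /\<^sub>R norm y) = \<phi> y / norm y"
          unfolding \<phi>_def by (simp add: abs_mult sum_distrib_left divide_inverse_commute)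
        finally have "\<phi> y0 * norm y \<le> \<phi> y" using False by (simp add: field_simps)
        then show ?thesis using pos by (simp add: field_simps)
      qed
    qed
  qed
  then obtain C where C: "C \<ge> 0" "\<And>y. y \<in> S \<Longrightarrow> norm y \<le> C * \<phi> y" by blast
  show ?thesis
  proof (intro exI[of _ C] conjI allI)
    show "C \<ge> 0" by fact
    fix z
    obtain y w where y: "y \<in> S" and w: "\<And>v. v \<in> S \<Longrightarrow> orthogonal w v" and z: "z = y + w"
      using orthogonal_subspace_decomp_exists[of "a ` I" z] unfolding S_def by metis
    have eq: "y \<bullet> a i = z \<bullet> a i" if "i \<in> I" for i
    proof -
      have "a i \<in> S" using that by (simp add: S_def span_base)
      then have "w \<bullet> a i = 0" using w by (simp add: orthogonal_def)
      then show ?thesis by (simp add: z inner_add_left)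
    qed
    have "norm y \<le> C * \<phi> y" using C y by blast
    also have "\<phi> y = (\<Sum>i\<in>I. \<bar>z \<bullet> a i\<bar>)" unfolding \<phi>_def using eq by simp
    finally show "\<exists>z'. (\<forall>i\<in>I. z' \<bullet> a i = z \<bullet> a i) \<and> norm z' \<le> C * (\<Sum>i\<in>I. \<bar>z \<bullet> a i\<bar>)"
      using eq by blast
  qed
qed

lemma subseq_conv:
  fixes f :: "nat \<Rightarrow> 'i \<Rightarrow> 'a::heine_borel"
  assumes "finite I" "\<And>i. i \<in> I \<Longrightarrow> bounded (range (\<lambda>n. f n i))"
  shows "\<exists>r. strict_mono r \<and> (\<forall>i\<in>I. \<exists>l. (\<lambda>n. f (r n) i) \<longlonglongrightarrow> l)"
  using assms
proof (induction I arbitrary: f rule: finite_induct)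
  case empty
  then show ?case by (intro exI[of _ id]) (auto simp: strict_mono_def)
next
  case (insert j F)
  then obtain r where r: "strict_mono r" "\<forall>i\<in>F. \<exists>l. (\<lambda>n. f (r n) j) \<longlonglongrightarrow> l \<or> True" "\<forall>i\<in>F. \<exists>l. (\<lambda>n. f (r n) i) \<longlonglongrightarrow> l"
    by (metis insertCI)
  have "bounded (range (\<lambda>n. f (r n) j))"
    using insert.prems[of j] by (rule bounded_subset) auto
  then obtain l r' where r': "strict_mono r'" "((\<lambda>n. f (r n) j) \<circ> r') \<longlonglongrightarrow> l"
    using bounded_imp_convergent_subsequence by blast
  show ?case
  proof (intro exI[of _ "r \<circ> r'"] conjI ballI)
    show "strict_mono (r \<circ> r')" using r r' by (simp add: strict_mono_o)
    fix i assume "i \<in> insert j F"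
    then show "\<exists>l. (\<lambda>n. f ((r \<circ> r') n) i) \<longlonglongrightarrow> l"
    proof
      assume "i = j" then show ?thesis using r' by (auto simp: o_def)
    next
      assume "i \<in> F"
      then obtain l where "(\<lambda>n. f (r n) i) \<longlonglongrightarrow> l" using r by blast
      then have "((\<lambda>n. f (r n) i) \<circ> r') \<longlonglongrightarrow> l" using r' LIMSEQ_subseq_LIMSEQ by blast
      then show ?thesis by (auto simp: o_def)
    qed
  qed
qed

definition side :: "(real^'n \<Rightarrow> real^'r) \<Rightarrow> real \<Rightarrow> (nat \<Rightarrow> real^'n) \<Rightarrow> nat \<Rightarrow> nat \<Rightarrow>
   (nat \<Rightarrow> real^'r) \<Rightarrow> (nat \<Rightarrow> real) \<Rightarrow> (nat \<Rightarrow> nat \<Rightarrow> real) \<Rightarrow> bool" where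
  "side g M x ND p V \<alpha> \<delta> \<longleftrightarrow>
     (\<forall>i\<in>{1..ND}.
        (\<forall>k\<in>{1..p}. V k \<bullet> g (x i) \<le> \<alpha> i) \<and>
        (\<forall>k\<in>{1..p}. V k \<bullet> g (x i) + M * (1 - \<delta> i k) \<ge> \<alpha> i) \<and>
        (\<Sum>k=1..p. \<delta> i k) = 1 \<and>
        (\<forall>k\<in>{1..p}. \<delta> i k \<in> {0, 1}))"

lemma feas_side:
  "miqp_feasible g h M x ND p1 p2 V W \<alpha> \<beta> \<gamma> \<delta> \<longleftrightarrow>
     side g M x ND p1 V \<alpha> \<delta> \<and> side h M x ND p2 W \<beta> \<gamma>"
  unfolding miqp_feasible_def side_def by blast

definition sw :: "nat \<Rightarrow> nat \<Rightarrow> nat \<Rightarrow> nat" where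
  "sw a b k = (if k = a then b else if k = b then a else k)"

lemma sw_in: "a \<in> A \<Longrightarrow> b \<in> A \<Longrightarrow> k \<in> A \<Longrightarrow> sw a b k \<in> A"
  by (simp add: sw_def)

lemma sw_sw: "sw a b (sw a b k) = k"
  by (simp add: sw_def)

lemma side_swap:
  assumes "side g M x ND p V \<alpha> \<delta>" "a \<in> {1..p}" "b \<in> {1..p}"
  shows "side g M x ND p (\<lambda>k. V (sw a b k)) \<alpha> (\<lambda>i k. \<delta> i (sw a b k))"
proof -
  have s: "(\<Sum>k=1..p. f (sw a b k)) = (\<Sum>k=1..p. f k)" for f :: "nat \<Rightarrow> real"
    by (rule sum.reindex_bij_witness[of _ "sw a b" "sw a b"])
       (use assms(2,3) in \<open>auto simp: sw_sw sw_def\<close>)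
  show ?thesis using assms sw_in[OF assms(2,3)] unfolding side_def s by blast
qed

lemma one_hot:
  fixes d :: "nat \<Rightarrow> real"
  assumes "finite A" "(\<Sum>k\<in>A. d k) = 1" "\<forall>k\<in>A. d k \<in> {0,1}"
  shows "\<exists>\<kappa>\<in>A. d \<kappa> = 1 \<and> (\<forall>k\<in>A. k \<noteq> \<kappa> \<longrightarrow> d k = 0)"
proof -
  obtain \<kappa> where k: "\<kappa> \<in> A" "d \<kappa> = 1"
  proof (rule ccontr)
    assume "\<not> thesis"
    then have "\<forall>k\<in>A. d k = 0" using assms(3) that by blast
    then show False using assms(2) by simp
  qed
  have "d k = 0" if "k \<in> A" "k \<noteq> \<kappa>" for k
  proof (rule ccontr)
    assume "d k \<noteq> 0"
    then have dk: "d k = 1" using assms(3) that by blast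
    have "(\<Sum>j\<in>{\<kappa>,k}. d j) \<le> (\<Sum>j\<in>A. d j)"
      using assms(1,3) k that by (intro sum_mono2) auto
    then show False using dk k that assms(2) by simp
  qed
  then show ?thesis using k by blast
qed

lemma stair_aux:
  assumes "side g M x ND p V \<alpha> \<delta>" "p \<le> ND"
  shows "m \<le> p - 1 \<Longrightarrow> \<exists>V' \<delta>' c. side g M x ND p V' \<alpha> \<delta>' \<and> c \<le> m \<and>
           (\<forall>i\<in>{1..m}. \<forall>k\<in>{i+1..p}. \<delta>' i k = 0) \<and>
           (\<forall>i\<in>{1..m}. \<forall>k\<in>{1..p}. \<delta>' i k \<noteq> 0 \<longrightarrow> k \<le> c)"
proof (induction m)
  case 0
  then show ?case using assms by (intro exI[of _ V] exI[of _ \<delta>] exI[of _ 0]) auto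
next
  case (Suc m)
  then obtain V' \<delta>' c where IH: "side g M x ND p V' \<alpha> \<delta>'" "c \<le> m"
    "\<forall>i\<in>{1..m}. \<forall>k\<in>{i+1..p}. \<delta>' i k = 0"
    "\<forall>i\<in>{1..m}. \<forall>k\<in>{1..p}. \<delta>' i k \<noteq> 0 \<longrightarrow> k \<le> c" by auto
  have iI: "Suc m \<in> {1..ND}" using Suc.prems assms(2) by auto
  then have "(\<Sum>k\<in>{1..p}. \<delta>' (Suc m) k) = 1" "\<forall>k\<in>{1..p}. \<delta>' (Suc m) k \<in> {0,1}"
    using IH(1) unfolding side_def by auto
  then obtain \<kappa> where ka: "\<kappa> \<in> {1..p}" "\<delta>' (Suc m) \<kappa> = 1"
    "\<forall>k\<in>{1..p}. k \<noteq> \<kappa> \<longrightarrow> \<delta>' (Suc m) k = 0"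
    using one_hot[of "{1..p}" "\<delta>' (Suc m)"] by auto
  show ?case
  proof (cases "\<kappa> \<le> c")
    case True
    show ?thesis
    proof (intro exI[of _ V'] exI[of _ \<delta>'] exI[of _ c] conjI)
      show "side g M x ND p V' \<alpha> \<delta>'" "c \<le> Suc m" using IH by auto
      show "\<forall>i\<in>{1..Suc m}. \<forall>k\<in>{i+1..p}. \<delta>' i k = 0"
        using IH(3) ka True IH(2) by (auto simp: le_Suc_eq)
      show "\<forall>i\<in>{1..Suc m}. \<forall>k\<in>{1..p}. \<delta>' i k \<noteq> 0 \<longrightarrow> k \<le> c"
      proof (intro ballI impI)
        fix i k assume i: "i \<in> {1..Suc m}" and k: "k \<in> {1..p}" and nz: "\<delta>' i k \<noteq> 0"
        show "k \<le> c"
        proof (cases "i = Suc m")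
          case True then show ?thesis using ka k nz \<open>\<kappa> \<le> c\<close> by fastforce
        next
          case False
          then have "i \<in> {1..m}" using i by auto
          then show ?thesis using IH(4) k nz by blast
        qed
      qed
    qed
  next
    case False
    have c1: "Suc c \<in> {1..p}" using IH(2) Suc.prems by auto
    define V'' where "V'' = (\<lambda>k. V' (sw \<kappa> (Suc c) k))"
    define \<delta>'' where "\<delta>'' = (\<lambda>i k. \<delta>' i (sw \<kappa> (Suc c) k))"
    have S: "side g M x ND p V'' \<alpha> \<delta>''"
      unfolding V''_def \<delta>''_def by (rule side_swap[OF IH(1) ka(1) c1])
    have old: "\<delta>'' i k = \<delta>' i k" if "i \<in> {1..m}" "k \<in> {1..p}" for i k
    proof -
      have "\<delta>' i \<kappa> = 0" "\<delta>' i (Suc c) = 0" using IH(4) that(1) ka(1) c1 False by force+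
      then show ?thesis unfolding \<delta>''_def sw_def by auto
    qed
    have new: "\<delta>'' (Suc m) k = 0" if "k \<in> {1..p}" "k \<noteq> Suc c" for k
    proof -
      have "sw \<kappa> (Suc c) k \<in> {1..p}" using sw_in[OF ka(1) c1 that(1)] .
      moreover have "sw \<kappa> (Suc c) k \<noteq> \<kappa>" using that by (auto simp: sw_def)
      ultimately show ?thesis using ka(3) unfolding \<delta>''_def by blast
    qed
    show ?thesis
    proof (intro exI[of _ V''] exI[of _ \<delta>''] exI[of _ "Suc c"] conjI)
      show "side g M x ND p V'' \<alpha> \<delta>''" by (rule S)
      show "Suc c \<le> Suc m" using IH by auto
      show "\<forall>i\<in>{1..Suc m}. \<forall>k\<in>{i+1..p}. \<delta>'' i k = 0"
      proof (intro ballI)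
        fix i k assume i: "i \<in> {1..Suc m}" and k: "k \<in> {i+1..p}"
        show "\<delta>'' i k = 0"
        proof (cases "i = Suc m")
          case True then show ?thesis using new k IH(2) by auto
        next
          case False
          then have "i \<in> {1..m}" using i by auto
          then show ?thesis using old IH(3) k by auto
        qed
      qed
      show "\<forall>i\<in>{1..Suc m}. \<forall>k\<in>{1..p}. \<delta>'' i k \<noteq> 0 \<longrightarrow> k \<le> Suc c"
      proof (intro ballI impI)
        fix i k assume i: "i \<in> {1..Suc m}" and k: "k \<in> {1..p}" and nz: "\<delta>'' i k \<noteq> 0"
        show "k \<le> Suc c"
        proof (cases "i = Suc m")
          case True then show ?thesis using new k nz by fastforce
        next
          case False
          then have "i \<in> {1..m}" using i by auto
          then show ?thesis using old IH(4) k nz by fastforce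
        qed
      qed
    qed
  qed
qed

lemma stair:
  assumes "side g M x ND p V \<alpha> \<delta>" "p \<le> ND"
  shows "\<exists>V' \<delta>'. side g M x ND p V' \<alpha> \<delta>' \<and> (\<forall>i\<in>{1..p-1}. \<forall>k\<in>{i+1..p}. \<delta>' i k = 0)"
  using stair_aux[OF assms, of "p - 1"] by blast

lemma side_cong:
  assumes "side g M x ND p V \<alpha> \<delta>"
    "\<forall>i\<in>{1..ND}. \<forall>k\<in>{1..p}. V' k \<bullet> g (x i) = V k \<bullet> g (x i) + c i"
    "\<forall>i\<in>{1..ND}. \<alpha>' i = \<alpha> i + c i"
    "\<forall>i\<in>{1..ND}. \<forall>k\<in>{1..p}. \<delta>' i k = \<delta> i k"
  shows "side g M x ND p V' \<alpha>' \<delta>'"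
  unfolding side_def
proof (intro ballI conjI)
  fix i assume i: "i \<in> {1..ND}"
  have s: "(\<Sum>k=1..p. \<delta>' i k) = (\<Sum>k=1..p. \<delta> i k)" using assms(4) i by (intro sum.cong) auto
  show "(\<Sum>k=1..p. \<delta>' i k) = 1" using assms(1) i unfolding s side_def by blast
  fix k assume k: "k \<in> {1..p}"
  show "V' k \<bullet> g (x i) \<le> \<alpha>' i" using assms i k unfolding side_def by force
  show "V' k \<bullet> g (x i) + M * (1 - \<delta>' i k) \<ge> \<alpha>' i" using assms i k unfolding side_def by force
  show "\<delta>' i k \<in> {0,1}" using assms i k unfolding side_def by force
qed

lemma side_bnd:
  assumes "side g M x ND p V \<alpha> \<delta>" "M \<ge> 0" "i \<in> {1..ND}" "k \<in> {1..p}"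
  shows "\<alpha> i - M \<le> V k \<bullet> g (x i) \<and> V k \<bullet> g (x i) \<le> \<alpha> i"
proof -
  have a: "V k \<bullet> g (x i) \<le> \<alpha> i" "V k \<bullet> g (x i) + M * (1 - \<delta> i k) \<ge> \<alpha> i" "\<delta> i k \<in> {0,1}"
    using assms unfolding side_def by auto
  then show ?thesis using assms(2) by auto
qed

lemma side_norm:
  fixes g :: "real^'n \<Rightarrow> real^'r" and x :: "nat \<Rightarrow> real^'n"
  assumes "0 < p" "M \<ge> 0" "0 < ND"
  shows "\<exists>C\<ge>0. \<forall>V \<alpha> \<delta> u Q. side g M x ND p V \<alpha> \<delta> \<and> (\<forall>i\<in>{1..ND}. \<bar>(V 1 + u) \<bullet> g (x i)\<bar> \<le> Q) \<longrightarrow>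
     (\<exists>V' \<alpha>' \<delta>'. side g M x ND p V' \<alpha>' \<delta>' \<and> (\<forall>i\<in>{1..ND}. \<alpha>' i = \<alpha> i + u \<bullet> g (x i)) \<and>
        (\<forall>k. norm (V' k) \<le> C * (real ND * (Q + 2*M))) \<and> (\<forall>i. \<bar>\<alpha>' i\<bar> \<le> Q + M) \<and> (\<forall>i k. \<bar>\<delta>' i k\<bar> \<le> 1))"
proof -
  obtain C where C: "C \<ge> 0" and Cz: "\<forall>z. \<exists>z'. (\<forall>i\<in>{1..ND}. z' \<bullet> g (x i) = z \<bullet> g (x i)) \<and>
      norm z' \<le> C * (\<Sum>i\<in>{1..ND}. \<bar>z \<bullet> g (x i)\<bar>)"
    using proj_bound[of "{1..ND}" "\<lambda>i. g (x i)"] by auto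
  obtain P where P: "\<And>z. (\<forall>i\<in>{1..ND}. P z \<bullet> g (x i) = z \<bullet> g (x i)) \<and>
      norm (P z) \<le> C * (\<Sum>i\<in>{1..ND}. \<bar>z \<bullet> g (x i)\<bar>)"
    using Cz by metis
  show ?thesis
  proof (intro exI[of _ C] conjI allI impI)
    show "C \<ge> 0" by fact
    fix V \<alpha> \<delta> u Q
    assume H: "side g M x ND p V \<alpha> \<delta> \<and> (\<forall>i\<in>{1..ND}. \<bar>(V 1 + u) \<bullet> g (x i)\<bar> \<le> Q)"
    have "1 \<in> {1..ND}" using assms(3) by auto
    then have "\<bar>(V 1 + u) \<bullet> g (x 1)\<bar> \<le> Q" using H by blast
    then have Q0: "Q \<ge> 0" by linarith
    define V' where "V' k = (if k \<in> {1..p} then P (V k + u) else 0)" for k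
    define \<alpha>' where "\<alpha>' i = (if i \<in> {1..ND} then \<alpha> i + u \<bullet> g (x i) else 0)" for i
    define \<delta>' where "\<delta>' i k = (if i \<in> {1..ND} \<and> k \<in> {1..p} then \<delta> i k else 0)" for i k
    have dot: "V' k \<bullet> g (x i) = V k \<bullet> g (x i) + u \<bullet> g (x i)" if "i \<in> {1..ND}" "k \<in> {1..p}" for i k
      using P[of "V k + u"] that by (simp add: V'_def inner_add_left)
    have S: "side g M x ND p V' \<alpha>' \<delta>'"
      by (rule side_cong[OF conjunct1[OF H], of _ "\<lambda>i. u \<bullet> g (x i)"]) (auto simp: dot \<alpha>'_def \<delta>'_def)
    have ab: "\<bar>\<alpha>' i\<bar> \<le> Q + M" for i
    proof (cases "i \<in> {1..ND}")
      case True
      have "1 \<in> {1..p}" using assms(1) by auto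
      from side_bnd[OF S assms(2) True this] have "\<alpha>' i - M \<le> V' 1 \<bullet> g (x i)" "V' 1 \<bullet> g (x i) \<le> \<alpha>' i" by auto
      moreover have "V' 1 \<bullet> g (x i) = (V 1 + u) \<bullet> g (x i)" using dot[OF True \<open>1 \<in> {1..p}\<close>] by (simp add: inner_add_left)
      moreover have "\<bar>(V 1 + u) \<bullet> g (x i)\<bar> \<le> Q" using H True by blast
      ultimately show ?thesis by linarith
    next
      case False then have "\<alpha>' i = 0" unfolding \<alpha>'_def by presburger
      then show ?thesis using Q0 assms(2) by simp
    qed
    have vb: "norm (V' k) \<le> C * (real ND * (Q + 2*M))" for k
    proof (cases "k \<in> {1..p}")
      case True
      have "norm (V' k) \<le> C * (\<Sum>i\<in>{1..ND}. \<bar>(V k + u) \<bullet> g (x i)\<bar>)" using P True by (simp add: V'_def)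
      also have "\<dots> \<le> C * (real ND * (Q + 2*M))"
      proof (intro mult_left_mono C)
        have "\<bar>(V k + u) \<bullet> g (x i)\<bar> \<le> Q + 2*M" if i: "i \<in> {1..ND}" for i
        proof -
          from side_bnd[OF S assms(2) i True] have "\<alpha>' i - M \<le> V' k \<bullet> g (x i)" "V' k \<bullet> g (x i) \<le> \<alpha>' i" by auto
          moreover have "V' k \<bullet> g (x i) = (V k + u) \<bullet> g (x i)" using dot[OF i True] by (simp add: inner_add_left)
          moreover note ab[of i]
          ultimately show ?thesis by linarith
        qed
        then have "(\<Sum>i\<in>{1..ND}. \<bar>(V k + u) \<bullet> g (x i)\<bar>) \<le> real (card {1..ND}) * (Q + 2*M)"
          by (intro sum_bounded_above) auto
        then show "(\<Sum>i\<in>{1..ND}. \<bar>(V k + u) \<bullet> g (x i)\<bar>) \<le> real ND * (Q + 2*M)" by simp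
      qed
      finally show ?thesis .
    next
      case False then have "V' k = 0" unfolding V'_def by presburger
      then show ?thesis using C Q0 assms(2) by simp
    qed
    have db: "\<bar>\<delta>' i k\<bar> \<le> 1" for i k
    proof (cases "i \<in> {1..ND} \<and> k \<in> {1..p}")
      case True
      then have "\<delta> i k \<in> {0,1}" using H unfolding side_def by blast
      then show ?thesis using True by (auto simp: \<delta>'_def)
    qed (auto simp: \<delta>'_def)
    show "\<exists>V' \<alpha>' \<delta>'. side g M x ND p V' \<alpha>' \<delta>' \<and> (\<forall>i\<in>{1..ND}. \<alpha>' i = \<alpha> i + u \<bullet> g (x i)) \<and>
        (\<forall>k. norm (V' k) \<le> C * (real ND * (Q + 2*M))) \<and> (\<forall>i. \<bar>\<alpha>' i\<bar> \<le> Q + M) \<and> (\<forall>i k. \<bar>\<delta>' i k\<bar> \<le> 1)"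
      using S ab vb db by (intro exI[of _ V'] exI[of _ \<alpha>'] exI[of _ \<delta>']) (auto simp: \<alpha>'_def)
  qed
qed

lemma normalize:
  fixes g :: "real^'n \<Rightarrow> real^'r1" and h :: "real^'n \<Rightarrow> real^'r2" and x :: "nat \<Rightarrow> real^'n"
  assumes "0 < ND" "0 < p1" "0 < p2" "M \<ge> 0"
  shows "\<exists>R. \<forall>V W \<alpha> \<beta> \<gamma> \<delta>. miqp_feasible g h M x ND p1 p2 V W \<alpha> \<beta> \<gamma> \<delta> \<and> (\<forall>i\<in>{1..ND}. \<bar>\<alpha> i - \<beta> i\<bar> \<le> B) \<longrightarrow>
     (\<exists>V' W' \<alpha>' \<beta>' \<gamma>' \<delta>'. miqp_feasible g h M x ND p1 p2 V' W' \<alpha>' \<beta>' \<gamma>' \<delta>' \<and>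
        (\<forall>i\<in>{1..ND}. \<alpha>' i - \<beta>' i = \<alpha> i - \<beta> i) \<and>
        (\<forall>k. norm (V' k) \<le> R) \<and> (\<forall>k. norm (W' k) \<le> R) \<and> (\<forall>i. \<bar>\<alpha>' i\<bar> \<le> R) \<and> (\<forall>i. \<bar>\<beta>' i\<bar> \<le> R) \<and>
        (\<forall>i k. \<bar>\<gamma>' i k\<bar> \<le> 1) \<and> (\<forall>i k. \<bar>\<delta>' i k\<bar> \<le> 1))"
proof -
  define I where "I = {1..ND}"
  define a where "a i = (g (x i), - h (x i))" for i
  obtain C1 where C1: "C1 \<ge> 0" and Cz: "\<forall>z. \<exists>z'. (\<forall>i\<in>I. z' \<bullet> a i = z \<bullet> a i) \<and>
      norm z' \<le> C1 * (\<Sum>i\<in>I. \<bar>z \<bullet> a i\<bar>)"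
    using proj_bound[of I a] unfolding I_def by auto
  obtain P where P: "\<And>z. (\<forall>i\<in>I. P z \<bullet> a i = z \<bullet> a i) \<and> norm (P z) \<le> C1 * (\<Sum>i\<in>I. \<bar>z \<bullet> a i\<bar>)"
    using Cz by metis
  obtain Cg where Cg: "Cg \<ge> 0" "\<forall>V \<alpha> \<delta> u Q. side g M x ND p1 V \<alpha> \<delta> \<and> (\<forall>i\<in>{1..ND}. \<bar>(V 1 + u) \<bullet> g (x i)\<bar> \<le> Q) \<longrightarrow>
     (\<exists>V' \<alpha>' \<delta>'. side g M x ND p1 V' \<alpha>' \<delta>' \<and> (\<forall>i\<in>{1..ND}. \<alpha>' i = \<alpha> i + u \<bullet> g (x i)) \<and>
        (\<forall>k. norm (V' k) \<le> Cg * (real ND * (Q + 2*M))) \<and> (\<forall>i. \<bar>\<alpha>' i\<bar> \<le> Q + M) \<and> (\<forall>i k. \<bar>\<delta>' i k\<bar> \<le> 1))"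
    using side_norm[OF assms(2,4,1), of g x] by blast
  obtain Ch where Ch: "Ch \<ge> 0" "\<forall>V \<alpha> \<delta> u Q. side h M x ND p2 V \<alpha> \<delta> \<and> (\<forall>i\<in>{1..ND}. \<bar>(V 1 + u) \<bullet> h (x i)\<bar> \<le> Q) \<longrightarrow>
     (\<exists>V' \<alpha>' \<delta>'. side h M x ND p2 V' \<alpha>' \<delta>' \<and> (\<forall>i\<in>{1..ND}. \<alpha>' i = \<alpha> i + u \<bullet> h (x i)) \<and>
        (\<forall>k. norm (V' k) \<le> Ch * (real ND * (Q + 2*M))) \<and> (\<forall>i. \<bar>\<alpha>' i\<bar> \<le> Q + M) \<and> (\<forall>i k. \<bar>\<delta>' i k\<bar> \<le> 1))"
    using side_norm[OF assms(3,4,1), of h x] by blast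
  define Gm where "Gm = (\<Sum>i\<in>I. norm (g (x i)))"
  define Hm where "Hm = (\<Sum>i\<in>I. norm (h (x i)))"
  define Rz where "Rz = C1 * (real ND * (B + M))"
  define Qg where "Qg = Rz * Gm"
  define Qh where "Qh = Rz * Hm"
  define R where "R = Cg * (real ND * (Qg + 2*M)) + Ch * (real ND * (Qh + 2*M)) + (Qg + M) + (Qh + M)"
  show ?thesis
  proof (intro exI[of _ R] allI impI)
    fix V W \<alpha> \<beta> \<gamma> \<delta>
    assume H: "miqp_feasible g h M x ND p1 p2 V W \<alpha> \<beta> \<gamma> \<delta> \<and> (\<forall>i\<in>{1..ND}. \<bar>\<alpha> i - \<beta> i\<bar> \<le> B)"
    then have SV: "side g M x ND p1 V \<alpha> \<delta>" and SW: "side h M x ND p2 W \<beta> \<gamma>"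
      and Bd: "\<And>i. i \<in> I \<Longrightarrow> \<bar>\<alpha> i - \<beta> i\<bar> \<le> B" by (auto simp: feas_side I_def)
    have 1: "1 \<in> I" "1 \<in> {1..p1}" "1 \<in> {1..p2}" using assms by (auto simp: I_def)
    have B0: "B \<ge> 0" using Bd[OF 1(1)] by linarith
    define z where "z = (V 1, W 1)"
    define v' where "v' = fst (P z)"
    define w' where "w' = snd (P z)"
    have za: "\<bar>z \<bullet> a i\<bar> \<le> B + M" if i: "i \<in> I" for i
    proof -
      have "z \<bullet> a i = V 1 \<bullet> g (x i) - W 1 \<bullet> h (x i)" by (simp add: z_def a_def)
      moreover have "\<alpha> i - M \<le> V 1 \<bullet> g (x i) \<and> V 1 \<bullet> g (x i) \<le> \<alpha> i"
        using side_bnd[OF SV assms(4) _ 1(2)] i by (simp add: I_def)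
      moreover have "\<beta> i - M \<le> W 1 \<bullet> h (x i) \<and> W 1 \<bullet> h (x i) \<le> \<beta> i"
        using side_bnd[OF SW assms(4) _ 1(3)] i by (simp add: I_def)
      moreover note Bd[OF i]
      ultimately show ?thesis by linarith
    qed
    have nPz: "norm (P z) \<le> Rz"
    proof -
      have "norm (P z) \<le> C1 * (\<Sum>i\<in>I. \<bar>z \<bullet> a i\<bar>)" using P by blast
      also have "\<dots> \<le> C1 * (real ND * (B + M))"
      proof (intro mult_left_mono C1)
        have "(\<Sum>i\<in>I. \<bar>z \<bullet> a i\<bar>) \<le> real (card I) * (B + M)" using za by (intro sum_bounded_above) auto
        then show "(\<Sum>i\<in>I. \<bar>z \<bullet> a i\<bar>) \<le> real ND * (B + M)" by (simp add: I_def)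
      qed
      finally show ?thesis by (simp add: Rz_def)
    qed
    have nv: "norm v' \<le> Rz" using nPz norm_fst_le[of "fst (P z)" "snd (P z)"] by (simp add: v'_def)
    have nw: "norm w' \<le> Rz" using nPz norm_snd_le[of "snd (P z)" "fst (P z)"] by (simp add: w'_def)
    have Rz0: "Rz \<ge> 0" using nv norm_ge_zero order_trans by blast
    have eqc: "(v' - V 1) \<bullet> g (x i) = (w' - W 1) \<bullet> h (x i)" if "i \<in> I" for i
    proof -
      have "P z \<bullet> a i = z \<bullet> a i" using P that by blast
      then have "v' \<bullet> g (x i) - w' \<bullet> h (x i) = V 1 \<bullet> g (x i) - W 1 \<bullet> h (x i)"
        by (metis prod.collapse v'_def w'_def z_def a_def inner_Pair inner_minus_right diff_conv_add_uminus)
      then show ?thesis by (simp add: inner_diff_left)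
    qed
    have qg: "\<bar>(V 1 + (v' - V 1)) \<bullet> g (x i)\<bar> \<le> Qg" if "i \<in> {1..ND}" for i
    proof -
      have "\<bar>v' \<bullet> g (x i)\<bar> \<le> norm v' * norm (g (x i))" by (rule Cauchy_Schwarz_ineq2)
      also have "\<dots> \<le> Rz * Gm"
        using nv that Rz0 unfolding Gm_def I_def
        by (intro mult_mono member_le_sum) auto
      finally show ?thesis by (simp add: Qg_def)
    qed
    have qh: "\<bar>(W 1 + (w' - W 1)) \<bullet> h (x i)\<bar> \<le> Qh" if "i \<in> {1..ND}" for i
    proof -
      have "\<bar>w' \<bullet> h (x i)\<bar> \<le> norm w' * norm (h (x i))" by (rule Cauchy_Schwarz_ineq2)
      also have "\<dots> \<le> Rz * Hm"
        using nw that Rz0 unfolding Hm_def I_def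
        by (intro mult_mono member_le_sum) auto
      finally show ?thesis by (simp add: Qh_def)
    qed
    obtain V' \<alpha>' \<delta>' where V': "side g M x ND p1 V' \<alpha>' \<delta>'" "\<forall>i\<in>{1..ND}. \<alpha>' i = \<alpha> i + (v' - V 1) \<bullet> g (x i)"
        "\<forall>k. norm (V' k) \<le> Cg * (real ND * (Qg + 2*M))" "\<forall>i. \<bar>\<alpha>' i\<bar> \<le> Qg + M" "\<forall>i k. \<bar>\<delta>' i k\<bar> \<le> 1"
      using Cg(2) SV qg by blast
    obtain W' \<beta>' \<gamma>' where W': "side h M x ND p2 W' \<beta>' \<gamma>'" "\<forall>i\<in>{1..ND}. \<beta>' i = \<beta> i + (w' - W 1) \<bullet> h (x i)"
        "\<forall>k. norm (W' k) \<le> Ch * (real ND * (Qh + 2*M))" "\<forall>i. \<bar>\<beta>' i\<bar> \<le> Qh + M" "\<forall>i k. \<bar>\<gamma>' i k\<bar> \<le> 1"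
      using Ch(2) SW qh by blast
    have Gm0: "Gm \<ge> 0" "Hm \<ge> 0" unfolding Gm_def Hm_def by (auto intro: sum_nonneg)
    have n1: "Cg * (real ND * (Qg + 2*M)) \<ge> 0" "Ch * (real ND * (Qh + 2*M)) \<ge> 0" "Qg + M \<ge> 0" "Qh + M \<ge> 0"
      using Cg(1) Ch(1) Rz0 Gm0 assms(4) by (auto simp: Qg_def Qh_def)
    show "\<exists>V' W' \<alpha>' \<beta>' \<gamma>' \<delta>'. miqp_feasible g h M x ND p1 p2 V' W' \<alpha>' \<beta>' \<gamma>' \<delta>' \<and>
        (\<forall>i\<in>{1..ND}. \<alpha>' i - \<beta>' i = \<alpha> i - \<beta> i) \<and>
        (\<forall>k. norm (V' k) \<le> R) \<and> (\<forall>k. norm (W' k) \<le> R) \<and> (\<forall>i. \<bar>\<alpha>' i\<bar> \<le> R) \<and> (\<forall>i. \<bar>\<beta>' i\<bar> \<le> R) \<and>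
        (\<forall>i k. \<bar>\<gamma>' i k\<bar> \<le> 1) \<and> (\<forall>i k. \<bar>\<delta>' i k\<bar> \<le> 1)"
    proof -
      have f: "miqp_feasible g h M x ND p1 p2 V' W' \<alpha>' \<beta>' \<gamma>' \<delta>'" using V'(1) W'(1) by (simp add: feas_side)
      have d: "\<forall>i\<in>{1..ND}. \<alpha>' i - \<beta>' i = \<alpha> i - \<beta> i" using V'(2) W'(2) eqc by (simp add: I_def)
      have b1: "\<forall>k. norm (V' k) \<le> R" using V'(3) n1 unfolding R_def by (smt (verit))
      have b2: "\<forall>k. norm (W' k) \<le> R" using W'(3) n1 unfolding R_def by (smt (verit))
      have b3: "\<forall>i. \<bar>\<alpha>' i\<bar> \<le> R"
      proof
        fix i show "\<bar>\<alpha>' i\<bar> \<le> R" using V'(4)[rule_format, of i] n1 unfolding R_def by linarith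
      qed
      have b4: "\<forall>i. \<bar>\<beta>' i\<bar> \<le> R"
      proof
        fix i show "\<bar>\<beta>' i\<bar> \<le> R" using W'(4)[rule_format, of i] n1 unfolding R_def by linarith
      qed
      show ?thesis using f d b1 b2 b3 b4 V'(5) W'(5) by blast
    qed
  qed
qed

lemma side_limit:
  assumes "\<forall>n. side g M x ND p (Vs n) (\<alpha>s n) (\<delta>s n)"
    "\<forall>k\<in>{1..p}. (\<lambda>n. Vs n k) \<longlonglongrightarrow> V k"
    "\<forall>i\<in>{1..ND}. (\<lambda>n. \<alpha>s n i) \<longlonglongrightarrow> \<alpha> i"
    "\<forall>i\<in>{1..ND}. \<forall>k\<in>{1..p}. (\<lambda>n. \<delta>s n i k) \<longlonglongrightarrow> \<delta> i k"
  shows "side g M x ND p V \<alpha> \<delta>"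
  unfolding side_def
proof (intro ballI conjI)
  fix i assume i: "i \<in> {1..ND}"
  have a: "(\<lambda>n. \<alpha>s n i) \<longlonglongrightarrow> \<alpha> i" using assms(3) i by blast
  have "(\<lambda>n. \<Sum>k=1..p. \<delta>s n i k) \<longlonglongrightarrow> (\<Sum>k=1..p. \<delta> i k)"
    using assms(4) i by (intro tendsto_sum) auto
  moreover have "(\<lambda>n. \<Sum>k=1..p. \<delta>s n i k) = (\<lambda>n. 1)" using assms(1) i unfolding side_def by auto
  ultimately show "(\<Sum>k=1..p. \<delta> i k) = 1" by (simp add: LIMSEQ_const_iff)
  fix k assume k: "k \<in> {1..p}"
  have v: "(\<lambda>n. Vs n k \<bullet> g (x i)) \<longlonglongrightarrow> V k \<bullet> g (x i)"
    using assms(2) k by (intro tendsto_inner tendsto_const) auto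
  have d: "(\<lambda>n. \<delta>s n i k) \<longlonglongrightarrow> \<delta> i k" using assms(4) i k by blast
  have s: "Vs n k \<bullet> g (x i) \<le> \<alpha>s n i" "Vs n k \<bullet> g (x i) + M * (1 - \<delta>s n i k) \<ge> \<alpha>s n i"
     "\<delta>s n i k \<in> {0,1}" for n
    using assms(1) i k unfolding side_def by auto
  show "V k \<bullet> g (x i) \<le> \<alpha> i"
    by (rule LIMSEQ_le[OF v a]) (use s in auto)
  have "(\<lambda>n. Vs n k \<bullet> g (x i) + M * (1 - \<delta>s n i k)) \<longlonglongrightarrow> V k \<bullet> g (x i) + M * (1 - \<delta> i k)"
    by (intro tendsto_intros v d)
  then show "V k \<bullet> g (x i) + M * (1 - \<delta> i k) \<ge> \<alpha> i"
    by (rule LIMSEQ_le[OF a]) (use s in auto)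
  show "\<delta> i k \<in> {0,1}"
    by (rule closed_sequentially[OF _ _ d]) (use s in auto)
qed

lemma abs_le_1_sq: "\<bar>t::real\<bar> \<le> 1 + t^2"
proof (cases "\<bar>t\<bar> \<le> 1")
  case True then show ?thesis using zero_le_power2[of t] by linarith
next
  case False
  then have "\<bar>t\<bar> * 1 \<le> \<bar>t\<bar> * \<bar>t\<bar>" by (intro mult_left_mono) auto
  then show ?thesis by (simp add: power2_eq_square abs_mult_self_eq)
qed

lemma exists_opt:
  fixes g :: "real^'n \<Rightarrow> real^'r1" and h :: "real^'n \<Rightarrow> real^'r2" and x :: "nat \<Rightarrow> real^'n"
    and y :: "nat \<Rightarrow> real"
  assumes "0 < ND" "0 < p1" "0 < p2" "M \<ge> 0" "p1 \<le> ND" "p2 \<le> ND"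
  shows "\<exists>V W \<alpha> \<beta> \<gamma> \<delta>. miqp_feasible g h M x ND p1 p2 V W \<alpha> \<beta> \<gamma> \<delta> \<and>
           (\<forall>V' W' \<alpha>' \<beta>' \<gamma>' \<delta>'. miqp_feasible g h M x ND p1 p2 V' W' \<alpha>' \<beta>' \<gamma>' \<delta>' \<longrightarrow>
               miqp_objective y ND \<alpha> \<beta> \<le> miqp_objective y ND \<alpha>' \<beta>')"
proof -
  define I where "I = {1..ND}"
  define F where "F = {t. \<exists>V W \<alpha> \<beta> \<gamma> \<delta>. miqp_feasible g h M x ND p1 p2 V W \<alpha> \<beta> \<gamma> \<delta> \<and> t = miqp_objective y ND \<alpha> \<beta>}"
  have obj0: "miqp_objective y ND a b \<ge> 0" for a b unfolding miqp_objective_def by (intro sum_nonneg) auto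
  have bdd: "bdd_below F" unfolding F_def bdd_below_def using obj0 by blast
  define d0 :: "nat \<Rightarrow> nat \<Rightarrow> real" where "d0 = (\<lambda>i k. if k = 1 then 1 else 0)"
  have f0: "miqp_feasible g h M x ND p1 p2 (\<lambda>k. 0) (\<lambda>k. 0) (\<lambda>i. 0) (\<lambda>i. 0) d0 d0"
    using assms(2,3,4) unfolding miqp_feasible_def d0_def by auto
  define o0 where "o0 = miqp_objective y ND (\<lambda>i. 0) (\<lambda>i. 0)"
  have o0F: "o0 \<in> F" unfolding F_def o0_def using f0 by blast
  then have Fne: "F \<noteq> {}" by blast
  define m where "m = Inf F"
  have mle: "m \<le> t" if "t \<in> F" for t unfolding m_def using bdd that by (rule cInf_lower[rotated])
  define B where "B = (\<Sum>i\<in>I. \<bar>y i\<bar>) + 1 + (o0 + 1)"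
  obtain R where R: "\<forall>V W \<alpha> \<beta> \<gamma> \<delta>. miqp_feasible g h M x ND p1 p2 V W \<alpha> \<beta> \<gamma> \<delta> \<and> (\<forall>i\<in>{1..ND}. \<bar>\<alpha> i - \<beta> i\<bar> \<le> B) \<longrightarrow>
     (\<exists>V' W' \<alpha>' \<beta>' \<gamma>' \<delta>'. miqp_feasible g h M x ND p1 p2 V' W' \<alpha>' \<beta>' \<gamma>' \<delta>' \<and>
        (\<forall>i\<in>{1..ND}. \<alpha>' i - \<beta>' i = \<alpha> i - \<beta> i) \<and>
        (\<forall>k. norm (V' k) \<le> R) \<and> (\<forall>k. norm (W' k) \<le> R) \<and> (\<forall>i. \<bar>\<alpha>' i\<bar> \<le> R) \<and> (\<forall>i. \<bar>\<beta>' i\<bar> \<le> R) \<and>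
        (\<forall>i k. \<bar>\<gamma>' i k\<bar> \<le> 1) \<and> (\<forall>i k. \<bar>\<delta>' i k\<bar> \<le> 1))"
    using normalize[OF assms(1-4), of g h x B] by blast
  define P where "P n V W \<alpha> \<beta> \<gamma> \<delta> \<longleftrightarrow> miqp_feasible g h M x ND p1 p2 V W \<alpha> \<beta> \<gamma> \<delta> \<and>
        miqp_objective y ND \<alpha> \<beta> < m + inverse (real (Suc n)) \<and>
        (\<forall>k. norm (V k) \<le> R) \<and> (\<forall>k. norm (W k) \<le> R) \<and> (\<forall>i. \<bar>\<alpha> i\<bar> \<le> R) \<and> (\<forall>i. \<bar>\<beta> i\<bar> \<le> R) \<and>
        (\<forall>i k. \<bar>\<gamma> i k\<bar> \<le> 1) \<and> (\<forall>i k. \<bar>\<delta> i k\<bar> \<le> 1)" for n V W \<alpha> \<beta> \<gamma> \<delta>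
  have seq: "\<exists>V W \<alpha> \<beta> \<gamma> \<delta>. P n V W \<alpha> \<beta> \<gamma> \<delta>" for n
  proof -
    have "Inf F < m + inverse (real (Suc n))" unfolding m_def by simp
    from cInf_lessD[OF Fne this] obtain t where "t \<in> F" "t < m + inverse (real (Suc n))" by blast
    then obtain V W \<alpha> \<beta> \<gamma> \<delta> where fe: "miqp_feasible g h M x ND p1 p2 V W \<alpha> \<beta> \<gamma> \<delta>"
      and ob: "miqp_objective y ND \<alpha> \<beta> < m + inverse (real (Suc n))" unfolding F_def by blast
    have "inverse (real (Suc n)) \<le> 1" by (simp add: inverse_le_1_iff)
    then have obK: "miqp_objective y ND \<alpha> \<beta> < o0 + 1" using ob mle[OF o0F] by linarith
    have bd: "\<bar>\<alpha> i - \<beta> i\<bar> \<le> B" if i: "i \<in> {1..ND}" for i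
    proof -
      have "(y i - (\<alpha> i - \<beta> i))^2 \<le> miqp_objective y ND \<alpha> \<beta>"
        unfolding miqp_objective_def using i by (intro member_le_sum) auto
      moreover have "\<bar>y i\<bar> \<le> (\<Sum>i\<in>I. \<bar>y i\<bar>)" using i unfolding I_def by (intro member_le_sum) auto
      moreover have "\<bar>y i - (\<alpha> i - \<beta> i)\<bar> \<le> 1 + (y i - (\<alpha> i - \<beta> i))^2" by (rule abs_le_1_sq)
      ultimately show ?thesis using obK unfolding B_def by linarith
    qed
    obtain V' W' \<alpha>' \<beta>' \<gamma>' \<delta>' where N: "miqp_feasible g h M x ND p1 p2 V' W' \<alpha>' \<beta>' \<gamma>' \<delta>'"
        "\<forall>i\<in>{1..ND}. \<alpha>' i - \<beta>' i = \<alpha> i - \<beta> i"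
        "(\<forall>k. norm (V' k) \<le> R) \<and> (\<forall>k. norm (W' k) \<le> R) \<and> (\<forall>i. \<bar>\<alpha>' i\<bar> \<le> R) \<and> (\<forall>i. \<bar>\<beta>' i\<bar> \<le> R) \<and>
        (\<forall>i k. \<bar>\<gamma>' i k\<bar> \<le> 1) \<and> (\<forall>i k. \<bar>\<delta>' i k\<bar> \<le> 1)"
      using R[rule_format, OF conjI[OF fe ballI[OF bd]]] by blast
    have "miqp_objective y ND \<alpha>' \<beta>' = miqp_objective y ND \<alpha> \<beta>"
      unfolding miqp_objective_def using N(2) by (intro sum.cong) auto
    then have "P n V' W' \<alpha>' \<beta>' \<gamma>' \<delta>'" using N ob unfolding P_def by simp
    then show ?thesis by blast
  qed
  obtain Vs Ws \<alpha>s \<beta>s \<gamma>s \<delta>s where S: "\<And>n. miqp_feasible g h M x ND p1 p2 (Vs n) (Ws n) (\<alpha>s n) (\<beta>s n) (\<gamma>s n) (\<delta>s n) \<and>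
        miqp_objective y ND (\<alpha>s n) (\<beta>s n) < m + inverse (real (Suc n)) \<and>
        (\<forall>k. norm (Vs n k) \<le> R) \<and> (\<forall>k. norm (Ws n k) \<le> R) \<and> (\<forall>i. \<bar>\<alpha>s n i\<bar> \<le> R) \<and> (\<forall>i. \<bar>\<beta>s n i\<bar> \<le> R) \<and>
        (\<forall>i k. \<bar>\<gamma>s n i k\<bar> \<le> 1) \<and> (\<forall>i k. \<bar>\<delta>s n i k\<bar> \<le> 1)"
  proof -
    from seq have "\<forall>n. \<exists>V W \<alpha> \<beta> \<gamma> \<delta>. P n V W \<alpha> \<beta> \<gamma> \<delta>" by blast
    then obtain Vs Ws \<alpha>s \<beta>s \<gamma>s \<delta>s where "\<forall>n. P n (Vs n) (Ws n) (\<alpha>s n) (\<beta>s n) (\<gamma>s n) (\<delta>s n)" by metis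
    then show ?thesis using that unfolding P_def by blast
  qed
  define f where "f n = (\<lambda>(i, k). (Vs n k, Ws n k, \<alpha>s n i, \<beta>s n i, \<delta>s n i k, \<gamma>s n i k))" for n
  define J where "J = {1..ND} \<times> {1..ND}"
  have "\<exists>r. strict_mono r \<and> (\<forall>j\<in>J. \<exists>l. (\<lambda>n. f (r n) j) \<longlonglongrightarrow> l)"
  proof (rule subseq_conv)
    show "finite J" unfolding J_def by simp
    fix j assume "j \<in> J"
    obtain i k where j: "j = (i, k)" by fastforce
    have "range (\<lambda>n. f n j) \<subseteq> cball 0 R \<times> cball 0 R \<times> cball 0 R \<times> cball 0 R \<times> cball 0 1 \<times> cball 0 1"
      using S unfolding f_def j by auto
    moreover have "bounded (cball (0::real^'r1) R \<times> cball (0::real^'r2) R \<times> cball (0::real) R \<times> cball (0::real) R \<times> cball (0::real) 1 \<times> cball (0::real) 1)"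
      by (intro bounded_Times bounded_cball)
    ultimately show "bounded (range (\<lambda>n. f n j))" by (rule bounded_subset[rotated])
  qed
  then obtain r where r: "strict_mono r" and "\<forall>j\<in>J. \<exists>l. (\<lambda>n. f (r n) j) \<longlonglongrightarrow> l" by blast
  then obtain L where L: "\<And>j. j \<in> J \<Longrightarrow> (\<lambda>n. f (r n) j) \<longlonglongrightarrow> L j" by metis
  define V where "V k = fst (L (1, k))" for k
  define W where "W k = fst (snd (L (1, k)))" for k
  define \<alpha> where "\<alpha> i = fst (snd (snd (L (i, 1))))" for i
  define \<beta> where "\<beta> i = fst (snd (snd (snd (L (i, 1)))))" for i
  define \<delta> where "\<delta> i k = fst (snd (snd (snd (snd (L (i, k))))))" for i k
  define \<gamma> where "\<gamma> i k = snd (snd (snd (snd (snd (L (i, k))))))" for i k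
  have cV: "(\<lambda>n. Vs (r n) k) \<longlonglongrightarrow> V k" if "k \<in> {1..ND}" for k
  proof -
    have "(1, k) \<in> J" using that assms(1) unfolding J_def by auto
    from tendsto_fst[OF L[OF this]] show ?thesis by (simp add: f_def V_def)
  qed
  have cW: "(\<lambda>n. Ws (r n) k) \<longlonglongrightarrow> W k" if "k \<in> {1..ND}" for k
  proof -
    have "(1, k) \<in> J" using that assms(1) unfolding J_def by auto
    from tendsto_fst[OF tendsto_snd[OF L[OF this]]] show ?thesis by (simp add: f_def W_def)
  qed
  have ca: "(\<lambda>n. \<alpha>s (r n) i) \<longlonglongrightarrow> \<alpha> i" if "i \<in> {1..ND}" for i
  proof -
    have "(i, 1) \<in> J" using that assms(1) unfolding J_def by auto
    from tendsto_fst[OF tendsto_snd[OF tendsto_snd[OF L[OF this]]]] show ?thesis by (simp add: f_def \<alpha>_def)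
  qed
  have cb: "(\<lambda>n. \<beta>s (r n) i) \<longlonglongrightarrow> \<beta> i" if "i \<in> {1..ND}" for i
  proof -
    have "(i, 1) \<in> J" using that assms(1) unfolding J_def by auto
    from tendsto_fst[OF tendsto_snd[OF tendsto_snd[OF tendsto_snd[OF L[OF this]]]]] show ?thesis by (simp add: f_def \<beta>_def)
  qed
  have cd: "(\<lambda>n. \<delta>s (r n) i k) \<longlonglongrightarrow> \<delta> i k" if "i \<in> {1..ND}" "k \<in> {1..ND}" for i k
  proof -
    have "(i, k) \<in> J" using that unfolding J_def by auto
    from tendsto_fst[OF tendsto_snd[OF tendsto_snd[OF tendsto_snd[OF tendsto_snd[OF L[OF this]]]]]] show ?thesis by (simp add: f_def \<delta>_def)
  qed
  have cg: "(\<lambda>n. \<gamma>s (r n) i k) \<longlonglongrightarrow> \<gamma> i k" if "i \<in> {1..ND}" "k \<in> {1..ND}" for i k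
  proof -
    have "(i, k) \<in> J" using that unfolding J_def by auto
    from tendsto_snd[OF tendsto_snd[OF tendsto_snd[OF tendsto_snd[OF tendsto_snd[OF L[OF this]]]]]] show ?thesis by (simp add: f_def \<gamma>_def)
  qed
  have SV: "side g M x ND p1 V \<alpha> \<delta>"
  proof (rule side_limit[of g M x ND p1 "\<lambda>n. Vs (r n)" "\<lambda>n. \<alpha>s (r n)" "\<lambda>n. \<delta>s (r n)"])
    show "\<forall>n. side g M x ND p1 (Vs (r n)) (\<alpha>s (r n)) (\<delta>s (r n))" using S by (simp add: feas_side)
    show "\<forall>k\<in>{1..p1}. (\<lambda>n. Vs (r n) k) \<longlonglongrightarrow> V k" using cV assms(5) by auto
    show "\<forall>i\<in>{1..ND}. (\<lambda>n. \<alpha>s (r n) i) \<longlonglongrightarrow> \<alpha> i" using ca by auto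
    show "\<forall>i\<in>{1..ND}. \<forall>k\<in>{1..p1}. (\<lambda>n. \<delta>s (r n) i k) \<longlonglongrightarrow> \<delta> i k" using cd assms(5) by auto
  qed
  have SW: "side h M x ND p2 W \<beta> \<gamma>"
  proof (rule side_limit[of h M x ND p2 "\<lambda>n. Ws (r n)" "\<lambda>n. \<beta>s (r n)" "\<lambda>n. \<gamma>s (r n)"])
    show "\<forall>n. side h M x ND p2 (Ws (r n)) (\<beta>s (r n)) (\<gamma>s (r n))" using S by (simp add: feas_side)
    show "\<forall>k\<in>{1..p2}. (\<lambda>n. Ws (r n) k) \<longlonglongrightarrow> W k" using cW assms(6) by auto
    show "\<forall>i\<in>{1..ND}. (\<lambda>n. \<beta>s (r n) i) \<longlonglongrightarrow> \<beta> i" using cb by auto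
    show "\<forall>i\<in>{1..ND}. \<forall>k\<in>{1..p2}. (\<lambda>n. \<gamma>s (r n) i k) \<longlonglongrightarrow> \<gamma> i k" using cg assms(6) by auto
  qed
  have feas: "miqp_feasible g h M x ND p1 p2 V W \<alpha> \<beta> \<gamma> \<delta>" using SV SW by (simp add: feas_side)
  have lim1: "(\<lambda>n. miqp_objective y ND (\<alpha>s (r n)) (\<beta>s (r n))) \<longlonglongrightarrow> miqp_objective y ND \<alpha> \<beta>"
    unfolding miqp_objective_def
    by (intro tendsto_sum tendsto_power tendsto_diff tendsto_const ca cb) auto
  have lim2: "(\<lambda>n. miqp_objective y ND (\<alpha>s n) (\<beta>s n)) \<longlonglongrightarrow> m"
  proof (rule tendsto_sandwich[of "\<lambda>n. m" _ _ "\<lambda>n. m + inverse (real (Suc n))"])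
    have "miqp_objective y ND (\<alpha>s n) (\<beta>s n) \<in> F" for n unfolding F_def using S by blast
    then show "\<forall>\<^sub>F n in sequentially. m \<le> miqp_objective y ND (\<alpha>s n) (\<beta>s n)" using mle by auto
    show "\<forall>\<^sub>F n in sequentially. miqp_objective y ND (\<alpha>s n) (\<beta>s n) \<le> m + inverse (real (Suc n))"
      using S by (intro always_eventually allI less_imp_le) blast
    show "(\<lambda>n. m) \<longlonglongrightarrow> m" by simp
    show "(\<lambda>n. m + inverse (real (Suc n))) \<longlonglongrightarrow> m"
      using tendsto_add[OF tendsto_const LIMSEQ_inverse_real_of_nat, of m] by simp
  qed
  have "(\<lambda>n. miqp_objective y ND (\<alpha>s (r n)) (\<beta>s (r n))) \<longlonglongrightarrow> m"
    using LIMSEQ_subseq_LIMSEQ[OF lim2 r] by (simp add: o_def)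
  then have eq: "miqp_objective y ND \<alpha> \<beta> = m" using lim1 LIMSEQ_unique by blast
  have opt: "\<forall>V' W' \<alpha>' \<beta>' \<gamma>' \<delta>'. miqp_feasible g h M x ND p1 p2 V' W' \<alpha>' \<beta>' \<gamma>' \<delta>' \<longrightarrow>
               miqp_objective y ND \<alpha> \<beta> \<le> miqp_objective y ND \<alpha>' \<beta>'"
  proof (intro allI impI)
    fix V' W' \<alpha>' \<beta>' \<gamma>' \<delta>'
    assume "miqp_feasible g h M x ND p1 p2 V' W' \<alpha>' \<beta>' \<gamma>' \<delta>'"
    then have "miqp_objective y ND \<alpha>' \<beta>' \<in> F" unfolding F_def by blast
    then show "miqp_objective y ND \<alpha> \<beta> \<le> miqp_objective y ND \<alpha>' \<beta>'" using mle eq by auto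
  qed
  show ?thesis using feas opt by blast
qed

theorem proposition1:
  fixes g :: "real^'n \<Rightarrow> real^'r1" and h :: "real^'n \<Rightarrow> real^'r2"
    and x :: "nat \<Rightarrow> real^'n" and y :: "nat \<Rightarrow> real"
    and M :: real and ND p1 p2 :: nat
  assumes "0 < ND" "0 < p1" "0 < p2" "p1 \<le> ND" "p2 \<le> ND"
    and "continuous_on UNIV g" "continuous_on UNIV h"
    and "M > 0"
  shows "\<exists>V W \<alpha> \<beta> \<gamma> \<delta>.
           miqp_feasible g h M x ND p1 p2 V W \<alpha> \<beta> \<gamma> \<delta> \<and>
           (\<forall>V' W' \<alpha>' \<beta>' \<gamma>' \<delta>'. miqp_feasible g h M x ND p1 p2 V' W' \<alpha>' \<beta>' \<gamma>' \<delta>' \<longrightarrow>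
               miqp_objective y ND \<alpha> \<beta> \<le> miqp_objective y ND \<alpha>' \<beta>') \<and>
           (\<forall>i\<in>{1..p1-1}. \<forall>k\<in>{i+1..p1}. \<delta> i k = 0) \<and>
           (\<forall>i\<in>{1..p2-1}. \<forall>k\<in>{i+1..p2}. \<gamma> i k = 0)"
proof -
  have M0: "M \<ge> 0" using assms(8) by simp
  obtain V W \<alpha> \<beta> \<gamma> \<delta> where fe: "miqp_feasible g h M x ND p1 p2 V W \<alpha> \<beta> \<gamma> \<delta>"
    and opt: "\<forall>V' W' \<alpha>' \<beta>' \<gamma>' \<delta>'. miqp_feasible g h M x ND p1 p2 V' W' \<alpha>' \<beta>' \<gamma>' \<delta>' \<longrightarrow>
               miqp_objective y ND \<alpha> \<beta> \<le> miqp_objective y ND \<alpha>' \<beta>'"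
    using exists_opt[OF assms(1,2,3) M0 assms(4,5), of g h x y] by blast
  have SV: "side g M x ND p1 V \<alpha> \<delta>" and SW: "side h M x ND p2 W \<beta> \<gamma>"
    using fe by (auto simp: feas_side)
  obtain V' \<delta>' where V': "side g M x ND p1 V' \<alpha> \<delta>'" "\<forall>i\<in>{1..p1-1}. \<forall>k\<in>{i+1..p1}. \<delta>' i k = 0"
    using stair[OF SV assms(4)] by blast
  obtain W' \<gamma>' where W': "side h M x ND p2 W' \<beta> \<gamma>'" "\<forall>i\<in>{1..p2-1}. \<forall>k\<in>{i+1..p2}. \<gamma>' i k = 0"
    using stair[OF SW assms(5)] by blast
  have "miqp_feasible g h M x ND p1 p2 V' W' \<alpha> \<beta> \<gamma>' \<delta>'" using V'(1) W'(1) by (simp add: feas_side)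
  then show ?thesis using opt V'(2) W'(2) by blast
qed

end
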